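(* Let $\lambda>0$ be fixed, and assume there are constants $C_d>C_u>0$ and events $\mathcal{B}_N$ on the predictor sample $\widetilde{\mathbf{x}}^N=(\widetilde{\mathbf{x}}_1,\dots,\widetilde{\mathbf{x}}_N)$, with $\mathbb{P}(\mathcal{B}_N)\to1$, such that on $\mathcal{B}_N$, with $K_0=\lfloor\ln(N)/(2C_d+1)\rfloor$, the eigenvalues $\widehat\mu_1\ge\dots\ge\widehat\mu_N$ of the Gram matrix $G$ satisfy $$\sum_{k=K_0}^N\widehat\mu_k\le\sum_{k=K_0}^Ne^{-C_uk}\quad\text{and}\quad\widehat\mu_{K_0}\ge e^{-C_dK_0}.$$ For a realization with invertible $G=U\Lambda U^\top$ ($U$ orthogonal, $\Lambda=\mathrm{diag}(\widehat\mu_\ell)$), let $D=\mathrm{diag}(\widehat\mu_\ell/(\widehat\mu_\ell+\lambda))$ and $M_m=\frac1NU(I-(I-D)^m)^2\Lambda^{-1}U^\top$. Let $m=m(N)=N^{\frac14\frac{C_u+C_d+1/2}{C_d+1}}$. Then there exists $\delta>0$ such that, uniformly over realizations $\widetilde{\mathbf{x}}^N\in\mathcal{B}_N$ (with $G$ invertible), as $N\to\infty$: 1. $N^{1/2+2\delta}\|M_m^{1/2}\|_F^2=\frac1{N^{1/2-2\delta}}\mathrm{tr}\big((I-(I-D)^m)^2\Lambda^{-1}\big)\to0$; 2. $\|M_m\|_F^2\to0$; 3. $\|M_m\|\to0$.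
   Context: Gram matrix: $G_{ij}=K(\widetilde{\mathbf{x}}_i,\widetilde{\mathbf{x}}_j)/N$ for the additive kernel $K(\mathbf{x},\mathbf{x}')=\sum_{j=1}^d\exp(-|x_j-x_j'|^2/(2\varsigma_j))$. $\|\cdot\|_F$ denotes the Frobenius norm and $\|\cdot\|$ the spectral norm. *)

theory Defs
  imports "HOL-Probability.Probability" "Jordan_Normal_Form.Matrix"
begin

definition addK :: "('d::finite \<Rightarrow> real) \<Rightarrow> ('d \<Rightarrow> real) \<Rightarrow> ('d \<Rightarrow> real) \<Rightarrow> real" where
  "addK vs x x' = (\<Sum>j\<in>UNIV. exp (- ((\<bar>x j - x' j\<bar>) ^ 2) / (2 * vs j)))"

text \<open>Gram matrix G_ij = K(x_i,x_j)/N of the sample x_0,...,x_(N-1) (0-based).\<close>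
definition gram :: "('d::finite \<Rightarrow> real) \<Rightarrow> nat \<Rightarrow> (nat \<Rightarrow> 'd \<Rightarrow> real) \<Rightarrow> real mat" where
  "gram vs N x = Matrix.mat N N (\<lambda>(i,j). addK vs (x i) (x j) / real N)"

definition orthogonal_mat :: "nat \<Rightarrow> real mat \<Rightarrow> bool" where
  "orthogonal_mat n U \<longleftrightarrow> U \<in> carrier_mat n n \<and> transpose_mat U * U = 1\<^sub>m n"

text \<open>G = U diag(mu_1,...,mu_N) U^T with U orthogonal and mu_1 >= ... >= mu_N
  (eigenvalues indexed 1..N; diagonal entry i (0-based) is mu (i+1)).\<close>
definition spectral_decomp :: "nat \<Rightarrow> real mat \<Rightarrow> real mat \<Rightarrow> (nat \<Rightarrow> real) \<Rightarrow> bool" where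
  "spectral_decomp N G U \<mu> \<longleftrightarrow> orthogonal_mat N U
     \<and> G = U * mat_diag N (\<lambda>i. \<mu> (Suc i)) * transpose_mat U
     \<and> (\<forall>k l. 1 \<le> k \<longrightarrow> k \<le> l \<longrightarrow> l \<le> N \<longrightarrow> \<mu> l \<le> \<mu> k)"

definition frob_norm :: "real mat \<Rightarrow> real" where
  "frob_norm A = sqrt (\<Sum>i<dim_row A. \<Sum>j<dim_col A. (A $$ (i,j))^2)"

definition vnorm :: "real vec \<Rightarrow> real" where
  "vnorm v = sqrt (\<Sum>i<dim_vec v. (v $ i)^2)"

definition spec_norm :: "real mat \<Rightarrow> real" where
  "spec_norm A = Sup {vnorm (A *\<^sub>v v) | v. v \<in> carrier_vec (dim_col A) \<and> vnorm v = 1}"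

definition mtrace :: "real mat \<Rightarrow> real" where
  "mtrace A = (\<Sum>i<dim_row A. A $$ (i,i))"

text \<open>Diagonal entries of D and of I - (I - D)^m (m real; (1-d)^m via powr, 0 < 1-d < 1).\<close>
definition dval :: "real \<Rightarrow> real \<Rightarrow> real" where
  "dval lam mu = mu / (mu + lam)"

definition filt :: "real \<Rightarrow> real \<Rightarrow> real \<Rightarrow> real" where
  "filt lam m mu = 1 - (1 - dval lam mu) powr m"

definition Mm :: "real \<Rightarrow> real \<Rightarrow> nat \<Rightarrow> real mat \<Rightarrow> (nat \<Rightarrow> real) \<Rightarrow> real mat" where
  "Mm lam m N U \<mu> = (1 / real N) \<cdot>\<^sub>m (U * mat_diag N (\<lambda>i. (filt lam m (\<mu> (Suc i)))^2 / \<mu> (Suc i)) * transpose_mat U)"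

definition Mm_sqrt :: "real \<Rightarrow> real \<Rightarrow> nat \<Rightarrow> real mat \<Rightarrow> (nat \<Rightarrow> real) \<Rightarrow> real mat" where
  "Mm_sqrt lam m N U \<mu> = U * mat_diag N (\<lambda>i. sqrt ((filt lam m (\<mu> (Suc i)))^2 / \<mu> (Suc i) / real N)) * transpose_mat U"

definition trace_term :: "real \<Rightarrow> real \<Rightarrow> nat \<Rightarrow> (nat \<Rightarrow> real) \<Rightarrow> real" where
  "trace_term lam m N \<mu> = mtrace (mat_diag N (\<lambda>i. (filt lam m (\<mu> (Suc i)))^2) * mat_diag N (\<lambda>i. 1 / \<mu> (Suc i)))"

definition K0 :: "real \<Rightarrow> nat \<Rightarrow> nat" where
  "K0 Cd N = nat \<lfloor>ln (real N) / (2 * Cd + 1)\<rfloor>"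

definition mN :: "real \<Rightarrow> real \<Rightarrow> nat \<Rightarrow> real" where
  "mN Cu Cd N = real N powr ((1/4) * (Cu + Cd + 1/2) / (Cd + 1))"

end

theory Submission
  imports Defs
begin

lemma udu_index:
  assumes U: "U \<in> carrier_mat n n" and i: "i < n" and j: "j < n"
  shows "(U * mat_diag n d * transpose_mat U) $$ (i,j) = (\<Sum>k<n. U$$(i,k) * d k * U$$(j,k))"
proof -
  have "U * mat_diag n d = Matrix.mat n n (\<lambda>(i,j). U $$ (i,j) * d j)"
    using mat_diag_mult_right[OF U] by simp
  then show ?thesis using U i j
    by (simp add: scalar_prod_def atLeast0LessThan)
qed

lemma frob_sq: "(frob_norm A)^2 = (\<Sum>i<dim_row A. \<Sum>j<dim_col A. (A $$ (i,j))^2)"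
  unfolding frob_norm_def by (simp add: sum_nonneg)

lemma orth_sum:
  assumes "orthogonal_mat n U" "k < n" "l < n"
  shows "(\<Sum>i<n. U$$(i,k) * U$$(i,l)) = (if k = l then 1 else 0)"
proof -
  have U: "U \<in> carrier_mat n n" and E: "transpose_mat U * U = 1\<^sub>m n"
    using assms(1) unfolding orthogonal_mat_def by auto
  have "(transpose_mat U * U) $$ (k,l) = (\<Sum>i<n. U$$(i,k) * U$$(i,l))"
    using U assms by (simp add: scalar_prod_def atLeast0LessThan)
  then show ?thesis using E assms by simp
qed

lemma swap4:
  fixes F :: "nat \<Rightarrow> nat \<Rightarrow> nat \<Rightarrow> nat \<Rightarrow> real"
  shows "(\<Sum>i\<in>A. \<Sum>j\<in>A. \<Sum>k\<in>A. \<Sum>l\<in>A. F i j k l) = (\<Sum>k\<in>A. \<Sum>l\<in>A. \<Sum>i\<in>A. \<Sum>j\<in>A. F i j k l)"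
proof -
  have "(\<Sum>i\<in>A. \<Sum>j\<in>A. \<Sum>k\<in>A. \<Sum>l\<in>A. F i j k l) = (\<Sum>i\<in>A. \<Sum>k\<in>A. \<Sum>j\<in>A. \<Sum>l\<in>A. F i j k l)"
    by (rule sum.cong[OF refl], rule sum.swap)
  also have "\<dots> = (\<Sum>i\<in>A. \<Sum>k\<in>A. \<Sum>l\<in>A. \<Sum>j\<in>A. F i j k l)"
    by (rule sum.cong[OF refl], rule sum.cong[OF refl], rule sum.swap)
  also have "\<dots> = (\<Sum>k\<in>A. \<Sum>i\<in>A. \<Sum>l\<in>A. \<Sum>j\<in>A. F i j k l)"
    by (rule sum.swap)
  also have "\<dots> = (\<Sum>k\<in>A. \<Sum>l\<in>A. \<Sum>i\<in>A. \<Sum>j\<in>A. F i j k l)"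
    by (rule sum.cong[OF refl], rule sum.swap)
  finally show ?thesis .
qed

lemma frob_udu:
  assumes O: "orthogonal_mat n U"
  shows "(frob_norm (U * mat_diag n d * transpose_mat U))^2 = (\<Sum>k<n. (d k)^2)"
proof -
  have U: "U \<in> carrier_mat n n" using O unfolding orthogonal_mat_def by auto
  have dims: "dim_row (U * mat_diag n d * transpose_mat U) = n" "dim_col (U * mat_diag n d * transpose_mat U) = n"
    using U by auto
  have "(frob_norm (U * mat_diag n d * transpose_mat U))^2 =
     (\<Sum>i<n. \<Sum>j<n. (\<Sum>k<n. U$$(i,k) * d k * U$$(j,k))^2)"
    unfolding frob_sq dims using udu_index[OF U] by simp
  also have "\<dots> = (\<Sum>i<n. \<Sum>j<n. \<Sum>k<n. \<Sum>l<n. (U$$(i,k) * d k * U$$(j,k)) * (U$$(i,l) * d l * U$$(j,l)))"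
    by (simp add: power2_eq_square sum_product)
  also have "\<dots> = (\<Sum>k<n. \<Sum>l<n. \<Sum>i<n. \<Sum>j<n. (U$$(i,k) * d k * U$$(j,k)) * (U$$(i,l) * d l * U$$(j,l)))"
    by (rule swap4)
  also have "\<dots> = (\<Sum>k<n. \<Sum>l<n. d k * d l * ((\<Sum>i<n. U$$(i,k) * U$$(i,l)) * (\<Sum>j<n. U$$(j,k) * U$$(j,l))))"
    by (simp add: sum_product sum_distrib_left mult_ac)
  also have "\<dots> = (\<Sum>k<n. \<Sum>l<n. if k = l then d k * d l else 0)"
    by (intro sum.cong refl) (simp add: orth_sum[OF O])
  also have "\<dots> = (\<Sum>k<n. (d k)^2)"
    by (simp add: power2_eq_square)
  finally show ?thesis .
qed

lemma frob_smult: "(frob_norm (c \<cdot>\<^sub>m A))^2 = c^2 * (frob_norm A)^2"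
  unfolding frob_sq by (simp add: sum_distrib_left power_mult_distrib)

lemma mv_bound:
  assumes A: "A \<in> carrier_mat n m" and v: "v \<in> carrier_vec m"
  shows "vnorm (A *\<^sub>v v) \<le> frob_norm A * vnorm v"
proof -
  have "(\<Sum>i<n. ((A *\<^sub>v v) $ i)^2) = (\<Sum>i<n. (\<Sum>j<m. A$$(i,j) * v$j)^2)"
    using A v by (intro sum.cong refl) (simp add: scalar_prod_def atLeast0LessThan)
  also have "\<dots> \<le> (\<Sum>i<n. (\<Sum>j<m. (A$$(i,j))^2) * (\<Sum>j<m. (v$j)^2))"
    by (intro sum_mono Cauchy_Schwarz_ineq_sum)
  also have "\<dots> = (frob_norm A)^2 * (vnorm v)^2"
    using A v unfolding frob_sq vnorm_def by (simp add: sum_distrib_right sum_nonneg)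
  finally have le: "(\<Sum>i<n. ((A *\<^sub>v v) $ i)^2) \<le> (frob_norm A * vnorm v)^2"
    by (simp add: power_mult_distrib)
  have "vnorm (A *\<^sub>v v) = sqrt (\<Sum>i<n. ((A *\<^sub>v v) $ i)^2)"
    using A unfolding vnorm_def by simp
  also have "\<dots> \<le> sqrt ((frob_norm A * vnorm v)^2)"
    using le by (rule real_sqrt_le_mono)
  also have "\<dots> = frob_norm A * vnorm v"
    by (simp add: frob_norm_def vnorm_def sum_nonneg)
  finally show ?thesis .
qed

lemma spec_bound:
  assumes A: "A \<in> carrier_mat n n" and n: "0 < n"
  shows "0 \<le> spec_norm A \<and> spec_norm A \<le> frob_norm A"
proof -
  define S where "S = {vnorm (A *\<^sub>v v) | v. v \<in> carrier_vec (dim_col A) \<and> vnorm v = 1}"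
  have e: "unit_vec n 0 \<in> carrier_vec (dim_col A)" "vnorm (unit_vec n 0) = 1"
  proof -
    have "(\<Sum>i<n. (if i = 0 then 1 else 0 :: real)\<^sup>2) = (\<Sum>i<n. (if i = 0 then 1 else 0))"
      by (intro sum.cong) auto
    also have "\<dots> = 1" using n by (simp add: sum.delta)
    finally show "unit_vec n 0 \<in> carrier_vec (dim_col A)" "vnorm (unit_vec n 0) = 1"
      using A by (auto simp: vnorm_def unit_vec_def)
  qed
  hence ne: "vnorm (A *\<^sub>v unit_vec n 0) \<in> S" unfolding S_def by blast
  have ub: "\<And>x. x \<in> S \<Longrightarrow> x \<le> frob_norm A"
    unfolding S_def using mv_bound[OF A] A by fastforce
  have bdd: "bdd_above S" using ub by (intro bdd_aboveI[of _ "frob_norm A"]) auto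
  have "0 \<le> vnorm (A *\<^sub>v unit_vec n 0)" by (simp add: vnorm_def sum_nonneg)
  also have "\<dots> \<le> Sup S" using cSup_upper[OF ne bdd] .
  finally have "0 \<le> Sup S" .
  moreover have "Sup S \<le> frob_norm A" using ne ub by (intro cSup_least) auto
  ultimately show ?thesis unfolding spec_norm_def S_def by simp
qed

lemma gauss_psd:
  fixes a w :: "nat \<Rightarrow> real" and s :: real
  assumes s: "s > 0"
  shows "0 \<le> (\<Sum>i<n. \<Sum>j<n. w i * w j * exp (- ((\<bar>a i - a j\<bar>) ^ 2) / (2 * s)))"
proof -
  define c where "c = (\<lambda>i. w i * exp (- (a i * a i) / (2 * s)))"
  have split: "w i * w j * exp (- ((\<bar>a i - a j\<bar>) ^ 2) / (2 * s)) = c i * c j * exp (a i * a j / s)" for i j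
  proof -
    have "- ((\<bar>a i - a j\<bar>) ^ 2) / (2 * s) = - (a i * a i) / (2 * s) + (- (a j * a j) / (2 * s)) + a i * a j / s"
      using s by (simp add: power2_eq_square field_simps)
    then have "exp (- ((\<bar>a i - a j\<bar>) ^ 2) / (2 * s)) = exp (- (a i * a i) / (2 * s)) * exp (- (a j * a j) / (2 * s)) * exp (a i * a j / s)"
      by (simp only: exp_add)
    then show ?thesis unfolding c_def by (simp add: mult_ac)
  qed
  have ser: "(\<lambda>k. c i * c j * ((a i * a j / s)^k / fact k)) sums (c i * c j * exp (a i * a j / s))" for i j
    using sums_mult[OF exp_converges[of "a i * a j / s"], of "c i * c j"] by (simp add: divide_inverse mult.commute)
  have tot: "(\<lambda>k. \<Sum>i<n. \<Sum>j<n. c i * c j * ((a i * a j / s)^k / fact k)) sums (\<Sum>i<n. \<Sum>j<n. c i * c j * exp (a i * a j / s))"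
    by (intro sums_sum ser)
  have trm: "(\<Sum>i<n. \<Sum>j<n. c i * c j * ((a i * a j / s)^k / fact k)) = (\<Sum>i<n. c i * a i ^ k)^2 / (s^k * fact k)" for k
    by (simp add: power2_eq_square sum_product sum_divide_distrib power_mult_distrib power_divide mult_ac)
  have "0 \<le> (\<Sum>i<n. \<Sum>j<n. c i * c j * exp (a i * a j / s))"
  proof -
    have h: "(\<lambda>k. (\<Sum>i<n. c i * a i ^ k)\<^sup>2 / (s ^ k * fact k)) sums (\<Sum>i<n. \<Sum>j<n. c i * c j * exp (a i * a j / s))"
      using tot unfolding trm .
    have "0 \<le> suminf (\<lambda>k. (\<Sum>i<n. c i * a i ^ k)\<^sup>2 / (s ^ k * fact k))"
      using s by (intro suminf_nonneg sums_summable[OF h]) auto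
    then show ?thesis using sums_unique[OF h] by simp
  qed
  then show ?thesis by (simp only: split)
qed

lemma gram_psd:
  fixes vs :: "'d::finite \<Rightarrow> real"
  assumes vs: "\<And>j. vs j > 0"
  shows "0 \<le> (\<Sum>i<N. \<Sum>j<N. w i * w j * gram vs N x $$ (i,j))"
proof -
  have "(\<Sum>i<N. \<Sum>j<N. w i * w j * gram vs N x $$ (i,j)) =
        (\<Sum>i<N. \<Sum>j<N. \<Sum>d\<in>UNIV. w i * w j * exp (- ((\<bar>x i d - x j d\<bar>) ^ 2) / (2 * vs d)) / real N)"
    by (intro sum.cong refl) (simp add: gram_def addK_def sum_distrib_left sum_divide_distrib)
  also have "\<dots> = (\<Sum>i<N. \<Sum>d\<in>UNIV. \<Sum>j<N. w i * w j * exp (- ((\<bar>x i d - x j d\<bar>) ^ 2) / (2 * vs d)) / real N)"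
    by (rule sum.cong[OF refl], rule sum.swap)
  also have "\<dots> = (\<Sum>d\<in>UNIV. \<Sum>i<N. \<Sum>j<N. w i * w j * exp (- ((\<bar>x i d - x j d\<bar>) ^ 2) / (2 * vs d)) / real N)"
    by (rule sum.swap)
  also have "\<dots> = (\<Sum>d\<in>UNIV. (\<Sum>i<N. \<Sum>j<N. w i * w j * exp (- ((\<bar>x i d - x j d\<bar>) ^ 2) / (2 * vs d))) / real N)"
    by (simp add: sum_divide_distrib)
  also have "\<dots> \<ge> 0"
    by (intro sum_nonneg divide_nonneg_nonneg gauss_psd[OF vs]) auto
  finally show ?thesis .
qed

lemma eig_pos:
  assumes sd: "spectral_decomp N G U \<mu>" and inv: "invertible_mat G"
    and G: "G \<in> carrier_mat N N"
    and psd: "\<And>w. 0 \<le> (\<Sum>i<N. \<Sum>j<N. w i * w j * G $$ (i,j))"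
    and k: "k < N"
  shows "\<mu> (Suc k) > 0"
proof -
  define L where "L = mat_diag N (\<lambda>i. \<mu> (Suc i))"
  have U: "U \<in> carrier_mat N N" and UTU: "transpose_mat U * U = 1\<^sub>m N"
    and GL: "G = U * L * transpose_mat U"
    using sd unfolding spectral_decomp_def orthogonal_mat_def L_def by auto
  have UT: "transpose_mat U \<in> carrier_mat N N" using U by simp
  have L: "L \<in> carrier_mat N N" unfolding L_def by simp
  have GU: "G * U = U * L"
  proof -
    have "G * U = U * L * (transpose_mat U * U)"
      unfolding GL using U L UT by (simp add: assoc_mult_mat[of _ N N _ N _ N])
    also have "\<dots> = U * L" using UTU U L by simp
    finally show ?thesis .
  qed
  have UGU: "transpose_mat U * G * U = L"
  proof -
    have "transpose_mat U * G * U = transpose_mat U * (G * U)"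
      using UT G U by (simp add: assoc_mult_mat[of _ N N _ N _ N])
    also have "\<dots> = (transpose_mat U * U) * L"
      unfolding GU using UT U L by (simp add: assoc_mult_mat[of _ N N _ N _ N])
    also have "\<dots> = L" using UTU L by simp
    finally show ?thesis .
  qed
  have "(transpose_mat U * G * U) $$ (k,k) = (\<Sum>i<N. U$$(i,k) * (\<Sum>j<N. G$$(i,j) * U$$(j,k)))"
    using U G k by (simp add: scalar_prod_def atLeast0LessThan)
  also have "\<dots> = (\<Sum>i<N. \<Sum>j<N. U$$(i,k) * U$$(j,k) * G$$(i,j))"
    by (simp add: sum_distrib_left mult_ac)
  finally have "L $$ (k,k) = (\<Sum>i<N. \<Sum>j<N. U$$(i,k) * U$$(j,k) * G$$(i,j))"
    using UGU by simp
  hence ge: "\<mu> (Suc k) \<ge> 0" using psd[of "\<lambda>i. U$$(i,k)"] k unfolding L_def by (simp add: mat_diag_def)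
  have ne: "\<mu> (Suc k) \<noteq> 0"
  proof
    assume z: "\<mu> (Suc k) = 0"
    obtain B where GB: "G * B = 1\<^sub>m (dim_row G)" and BG: "B * G = 1\<^sub>m (dim_row B)"
      using inv unfolding invertible_mat_def inverts_mat_def by blast
    have B: "B \<in> carrier_mat N N"
    proof -
      have "dim_col (G * B) = dim_col B" by simp
      hence c: "dim_col B = N" using GB G by simp
      have "dim_col (B * G) = N" using G by simp
      hence r: "dim_row B = N" using BG by simp
      show ?thesis using c r by auto
    qed
    have BG': "B * G = 1\<^sub>m N" using BG B by simp
    have "1\<^sub>m N = transpose_mat U * (B * G) * U" using UTU BG' UT U by simp
    also have "\<dots> = (transpose_mat U * B) * (G * U)"
      using UT B G U by (simp add: assoc_mult_mat[of _ N N _ N _ N])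
    also have "\<dots> = ((transpose_mat U * B) * U) * L"
      unfolding GU using UT B U L by (simp add: assoc_mult_mat[of _ N N _ N _ N])
    finally have eq: "1\<^sub>m N = ((transpose_mat U * B) * U) * L" .
    have X: "(transpose_mat U * B) * U \<in> carrier_mat N N" using UT B U by simp
    have "(((transpose_mat U * B) * U) * L) $$ (k,k) = ((transpose_mat U * B) * U) $$ (k,k) * \<mu> (Suc k)"
      unfolding L_def using mat_diag_mult_right[OF X] k by simp
    also have "\<dots> = 0" using z by simp
    finally show False using eq k by (metis index_one_mat(1) zero_neq_one)
  qed
  show ?thesis using ge ne by simp
qed

lemma filt_bounds:
  assumes lam: "lam > 0" and mu: "mu > 0" and m: "m \<ge> 0"
  shows "0 \<le> filt lam m mu \<and> filt lam m mu \<le> 1 \<and> filt lam m mu \<le> m * mu / lam"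
proof -
  have r: "1 - dval lam mu = lam / (mu + lam)"
    using lam mu unfolding dval_def by (simp add: field_simps)
  have rpos: "lam / (mu + lam) > 0" using lam mu by simp
  have rle: "lam / (mu + lam) \<le> 1" using lam mu by simp
  define t where "t = ln (1 + mu / lam)"
  have lnr: "ln (lam / (mu + lam)) = - t"
  proof -
    have "lam / (mu + lam) = inverse (1 + mu / lam)" using lam mu by (simp add: field_simps)
    then show ?thesis unfolding t_def using lam mu by (simp add: ln_inverse)
  qed
  have t0: "t \<ge> 0" unfolding t_def using lam mu by simp
  have tle: "t \<le> mu / lam" unfolding t_def using lam mu
    by (intro ln_add_one_self_le_self) simp
  have f: "filt lam m mu = 1 - exp (- (m * t))"
    unfolding filt_def r using rpos lam mu by (simp add: powr_def lnr)
  have e1: "exp (- (m * t)) \<le> 1" using m t0 by simp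
  have e0: "exp (- (m * t)) > 0" by simp
  have e2: "1 - m * t \<le> exp (- (m * t))" using exp_ge_add_one_self[of "- (m * t)"] by simp
  have "m * t \<le> m * (mu / lam)" using mult_left_mono[OF tle m] by simp
  then show ?thesis unfolding f using e1 e0 e2 by auto
qed

lemma trace_bound:
  fixes lam Cd Cu :: real and N :: nat and \<mu> :: "nat \<Rightarrow> real"
  assumes lam: "lam > 0" and Cd: "Cd > 0" and Cu: "Cu > 0"
    and K1: "1 \<le> K0 Cd N"
    and pos: "\<And>k. 1 \<le> k \<Longrightarrow> k \<le> N \<Longrightarrow> \<mu> k > 0"
    and mono: "\<And>k l. 1 \<le> k \<Longrightarrow> k \<le> l \<Longrightarrow> l \<le> N \<Longrightarrow> \<mu> l \<le> \<mu> k"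
    and sumb: "(\<Sum>k=K0 Cd N..N. \<mu> k) \<le> (\<Sum>k=K0 Cd N..N. exp (- Cu * real k))"
    and low: "\<mu> (K0 Cd N) \<ge> exp (- Cd * real (K0 Cd N))"
  shows "(\<Sum>i<N. (filt lam (mN Cu Cd N) (\<mu> (Suc i)))^2 * (1 / \<mu> (Suc i)))
     \<le> ln (real N) * real N powr (Cd / (2*Cd+1))
       + exp Cu / (lam^2 * (1 - exp (- Cu))) * real N powr (2 * ((1/4) * (Cu + Cd + 1/2) / (Cd + 1)) - Cu / (2*Cd+1))"
proof -
  define K where "K = K0 Cd N"
  define L where "L = ln (real N) / (2*Cd+1)"
  define a where "a = Cd / (2*Cd+1)"
  define p where "p = (1/4) * (Cu + Cd + 1/2) / (Cd + 1)"
  define m where "m = mN Cu Cd N"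
  define r where "r = exp (- Cu)"
  define h where "h k = (filt lam m (\<mu> k))^2 * (1 / \<mu> k)" for k
  have Kdef: "K = nat \<lfloor>L\<rfloor>" unfolding K_def K0_def L_def by simp
  have Npos: "N > 0"
  proof (rule ccontr)
    assume "\<not> N > 0" hence "N = 0" by simp
    hence "K = 0" unfolding Kdef L_def by simp
    thus False using K1 unfolding K_def by simp
  qed
  have lnN: "ln (real N) \<ge> 0" using Npos by simp
  have L0: "L \<ge> 0" unfolding L_def using lnN Cd by simp
  have KL: "real K \<le> L" unfolding Kdef using L0 by simp
  have KL1: "L - 1 < real K" unfolding Kdef using L0 by linarith
  have LlnN: "L \<le> ln (real N)" unfolding L_def using lnN Cd mult_left_mono[of 1 "2*Cd+1" "ln (real N)"] by (simp add: divide_le_eq)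
  have "ln (real N) \<le> real N - 1" using Npos by (intro ln_le_minus_one) simp
  hence KN: "K \<le> N" using KL LlnN by linarith
  have K1': "1 \<le> K" using K1 unfolding K_def .
  have m0: "m \<ge> 0" unfolding m_def mN_def by simp
  have muK: "\<mu> K > 0" using pos K1' KN by simp
  have split: "{1..N} = {1..<K} \<union> {K..N}" using K1' KN by auto
  have "(\<Sum>i<N. (filt lam m (\<mu> (Suc i)))^2 * (1 / \<mu> (Suc i))) = (\<Sum>k=1..N. h k)"
    unfolding h_def by (rule sum_bounds_lt_plus1)
  also have "\<dots> = (\<Sum>k=1..<K. h k) + (\<Sum>k=K..N. h k)"
    unfolding split by (rule sum.union_disjoint) auto
  finally have S: "(\<Sum>i<N. (filt lam m (\<mu> (Suc i)))^2 * (1 / \<mu> (Suc i))) = (\<Sum>k=1..<K. h k) + (\<Sum>k=K..N. h k)" .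
  have expL: "exp (Cd * L) = real N powr a"
    unfolding a_def L_def using Npos by (simp add: powr_def field_simps)
  have hA: "h k \<le> real N powr a" if k: "k \<in> {1..<K}" for k
  proof -
    have muk: "\<mu> k > 0" using k KN pos by simp
    have fb: "0 \<le> filt lam m (\<mu> k) \<and> filt lam m (\<mu> k) \<le> 1" using filt_bounds[OF lam muk m0] by simp
    have "(filt lam m (\<mu> k))^2 \<le> 1" using fb by (simp add: power_le_one)
    hence "h k \<le> 1 / \<mu> k" unfolding h_def using muk by (simp add: divide_le_eq)
    also have "\<dots> \<le> 1 / \<mu> K" using mono[of k K] k KN muK by (simp add: frac_le)
    also have "\<dots> \<le> 1 / exp (- Cd * real K)" using low muK unfolding K_def by (simp add: frac_le)
    also have "\<dots> = exp (Cd * real K)" by (simp add: exp_minus field_simps)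
    also have "\<dots> \<le> exp (Cd * L)" using KL Cd by simp
    finally show ?thesis using expL by simp
  qed
  have A: "(\<Sum>k=1..<K. h k) \<le> ln (real N) * real N powr a"
  proof -
    have "(\<Sum>k=1..<K. h k) \<le> real (card {1..<K}) * real N powr a"
      using hA by (intro sum_bounded_above) auto
    also have "\<dots> \<le> ln (real N) * real N powr a"
      using KL LlnN by (intro mult_right_mono) auto
    finally show ?thesis .
  qed
  have hB: "h k \<le> m^2 / lam^2 * \<mu> k" if k: "k \<in> {K..N}" for k
  proof -
    have muk: "\<mu> k > 0" using k K1' pos by simp
    have fb: "0 \<le> filt lam m (\<mu> k) \<and> filt lam m (\<mu> k) \<le> m * \<mu> k / lam" using filt_bounds[OF lam muk m0] by simp
    have "(filt lam m (\<mu> k))^2 \<le> (m * \<mu> k / lam)^2" using fb by (intro power_mono) auto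
    hence "h k \<le> (m * \<mu> k / lam)^2 / \<mu> k" unfolding h_def using muk by (simp add: divide_right_mono)
    also have "\<dots> = m^2 / lam^2 * \<mu> k" using muk by (simp add: power2_eq_square field_simps)
    finally show ?thesis .
  qed
  have geo: "(\<Sum>k=K..N. exp (- Cu * real k)) \<le> r ^ K / (1 - r)"
  proof -
    have r1: "r < 1" "r > 0" unfolding r_def using Cu by auto
    have "(\<Sum>k=K..N. exp (- Cu * real k)) = (\<Sum>k=K..N. r ^ k)"
      unfolding r_def by (intro sum.cong refl) (simp add: exp_of_nat_mult[symmetric] mult.commute)
    also have "\<dots> = (r ^ K - r ^ Suc N) / (1 - r)" using KN r1 by (simp add: sum_gp)
    also have "\<dots> \<le> r ^ K / (1 - r)" using r1 by (intro divide_right_mono) auto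
    finally show ?thesis .
  qed
  have rK: "r ^ K \<le> exp Cu * real N powr (- Cu / (2*Cd+1))"
  proof -
    have "r ^ K = exp (- Cu * real K)" unfolding r_def by (simp add: exp_of_nat_mult[symmetric] mult.commute)
    also have "\<dots> \<le> exp (- Cu * (L - 1))" using KL1 Cu by simp
    also have "\<dots> = exp Cu * exp (- Cu * L)" by (simp add: exp_add[symmetric] algebra_simps)
    also have "exp (- Cu * L) = real N powr (- Cu / (2*Cd+1))"
      unfolding L_def using Npos by (simp add: powr_def field_simps)
    finally show ?thesis by simp
  qed
  have m2: "m^2 = real N powr (2 * p)"
  proof -
    have "m^2 = real N powr p * real N powr p" unfolding m_def mN_def p_def by (simp add: power2_eq_square)
    also have "\<dots> = real N powr (p + p)" by (simp only: powr_add)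
    also have "p + p = 2 * p" by simp
    finally show ?thesis .
  qed
  have B: "(\<Sum>k=K..N. h k) \<le> exp Cu / (lam^2 * (1 - r)) * real N powr (2 * p - Cu / (2*Cd+1))"
  proof -
    have r1: "r < 1" "r > 0" unfolding r_def using Cu by auto
    have "(\<Sum>k=K..N. h k) \<le> (\<Sum>k=K..N. m^2 / lam^2 * \<mu> k)" using hB by (intro sum_mono) auto
    also have "\<dots> = m^2 / lam^2 * (\<Sum>k=K..N. \<mu> k)" by (simp add: sum_distrib_left)
    also have "\<dots> \<le> m^2 / lam^2 * (r ^ K / (1 - r))"
      using sumb geo unfolding K_def by (intro mult_left_mono) auto
    also have "\<dots> \<le> m^2 / lam^2 * (exp Cu * real N powr (- Cu / (2*Cd+1)) / (1 - r))"
      using rK r1 by (intro mult_left_mono divide_right_mono) auto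
    also have "\<dots> = exp Cu / (lam^2 * (1 - r)) * (real N powr (2 * p) * real N powr (- Cu / (2*Cd+1)))"
      unfolding m2 by (simp add: field_simps)
    also have "\<dots> = exp Cu / (lam^2 * (1 - r)) * real N powr (2 * p - Cu / (2*Cd+1))"
      by (simp add: powr_add[symmetric])
    finally show ?thesis .
  qed
  show ?thesis using S A B unfolding a_def p_def r_def m_def by simp
qed

lemma sum_sq_le:
  fixes d :: "nat \<Rightarrow> real"
  assumes "\<And>k. k \<in> A \<Longrightarrow> d k \<ge> 0" and "finite A"
  shows "(\<Sum>k\<in>A. (d k)^2) \<le> (\<Sum>k\<in>A. d k)^2"
proof -
  have "(\<Sum>k\<in>A. (d k)^2) \<le> (\<Sum>k\<in>A. d k * (\<Sum>j\<in>A. d j))"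
  proof (rule sum_mono)
    fix k assume k: "k \<in> A"
    have "d k \<le> (\<Sum>j\<in>A. d j)" using assms k by (intro member_le_sum) auto
    then show "(d k)^2 \<le> d k * (\<Sum>j\<in>A. d j)"
      using assms(1)[OF k] by (simp add: power2_eq_square mult_left_mono)
  qed
  also have "\<dots> = (\<Sum>k\<in>A. d k)^2" by (simp add: power2_eq_square sum_distrib_right)
  finally show ?thesis .
qed

lemma key_facts:
  fixes vs :: "'d::finite \<Rightarrow> real"
  assumes vs: "\<And>j. vs j > 0" and inv: "invertible_mat (gram vs N x)"
    and sd: "spectral_decomp N (gram vs N x) U \<mu>"
  shows "\<And>k. k < N \<Longrightarrow> \<mu> (Suc k) > 0"
    and "trace_term lam m N \<mu> = (\<Sum>i<N. (filt lam m (\<mu> (Suc i)))^2 * (1 / \<mu> (Suc i)))"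
    and "0 \<le> trace_term lam m N \<mu>"
    and "(frob_norm (Mm_sqrt lam m N U \<mu>))^2 = trace_term lam m N \<mu> / real N"
    and "(frob_norm (Mm lam m N U \<mu>))^2 \<le> (trace_term lam m N \<mu> / real N)^2"
    and "N > 0 \<Longrightarrow> 0 \<le> spec_norm (Mm lam m N U \<mu>) \<and> spec_norm (Mm lam m N U \<mu>) \<le> frob_norm (Mm lam m N U \<mu>)"
proof -
  have G: "gram vs N x \<in> carrier_mat N N" unfolding gram_def by simp
  have O: "orthogonal_mat N U" using sd unfolding spectral_decomp_def by simp
  have U: "U \<in> carrier_mat N N" using O unfolding orthogonal_mat_def by simp
  show pos: "\<And>k. k < N \<Longrightarrow> \<mu> (Suc k) > 0"
    using eig_pos[OF sd inv G gram_psd[OF vs]] by blast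
  show T: "trace_term lam m N \<mu> = (\<Sum>i<N. (filt lam m (\<mu> (Suc i)))^2 * (1 / \<mu> (Suc i)))"
    unfolding trace_term_def mtrace_def mat_diag_diag by (simp add: mat_diag_def)
  define d where "d i = (filt lam m (\<mu> (Suc i)))^2 / \<mu> (Suc i)" for i
  have d0: "d i \<ge> 0" if "i < N" for i unfolding d_def using pos[OF that] by simp
  have Td: "trace_term lam m N \<mu> = (\<Sum>i<N. d i)" unfolding T d_def by (simp add: divide_inverse)
  show T0: "0 \<le> trace_term lam m N \<mu>" unfolding Td using d0 by (intro sum_nonneg) auto
  have "(frob_norm (Mm_sqrt lam m N U \<mu>))^2 = (\<Sum>i<N. (sqrt (d i / real N))^2)"
    using frob_udu[OF O, of "\<lambda>i. sqrt (d i / real N)"] unfolding Mm_sqrt_def d_def by simp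
  also have "\<dots> = (\<Sum>i<N. d i / real N)" using d0 by (intro sum.cong refl) simp
  also have "\<dots> = trace_term lam m N \<mu> / real N" unfolding Td by (simp add: sum_divide_distrib)
  finally show "(frob_norm (Mm_sqrt lam m N U \<mu>))^2 = trace_term lam m N \<mu> / real N" .
  have "(frob_norm (Mm lam m N U \<mu>))^2 = (1 / real N)^2 * (\<Sum>i<N. (d i)^2)"
    using frob_udu[OF O, of d] frob_smult[of "1 / real N" "U * mat_diag N d * transpose_mat U"] unfolding Mm_def d_def by simp
  also have "\<dots> \<le> (1 / real N)^2 * (\<Sum>i<N. d i)^2"
    using d0 by (intro mult_left_mono sum_sq_le) auto
  also have "\<dots> = (trace_term lam m N \<mu> / real N)^2" unfolding Td by (simp add: power_divide)
  finally show "(frob_norm (Mm lam m N U \<mu>))^2 \<le> (trace_term lam m N \<mu> / real N)^2" .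
  have Mc: "Mm lam m N U \<mu> \<in> carrier_mat N N" unfolding Mm_def
    by (rule smult_carrier_mat, rule mult_carrier_mat[of _ N N], rule mult_carrier_mat[OF U mat_diag_dim], simp add: U)
  show "N > 0 \<Longrightarrow> 0 \<le> spec_norm (Mm lam m N U \<mu>) \<and> spec_norm (Mm lam m N U \<mu>) \<le> frob_norm (Mm lam m N U \<mu>)"
    using spec_bound[OF Mc] by blast
qed

theorem lemma6:
  fixes lam Cd Cu :: real
    and vs :: "'d::finite \<Rightarrow> real"
    and P :: "(nat \<Rightarrow> 'd \<Rightarrow> real) measure"
    and B :: "nat \<Rightarrow> (nat \<Rightarrow> 'd \<Rightarrow> real) set"
  assumes lam: "lam > 0"
    and vs: "\<And>j. vs j > 0"
    and C: "Cd > Cu" "Cu > 0"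
    and P: "prob_space P"
    and Bmeas: "\<And>N. B N \<in> sets P"
    and Bprob: "(\<lambda>N. measure P (B N)) \<longlonglongrightarrow> 1"
    and Beig: "\<And>N x U \<mu>. x \<in> B N \<Longrightarrow> 1 \<le> K0 Cd N \<Longrightarrow>
                 spectral_decomp N (gram vs N x) U \<mu> \<Longrightarrow>
                 (\<Sum>k=K0 Cd N..N. \<mu> k) \<le> (\<Sum>k=K0 Cd N..N. exp (- Cu * real k))
                 \<and> \<mu> (K0 Cd N) \<ge> exp (- Cd * real (K0 Cd N))"
  shows "\<exists>\<delta>>0.
     (\<forall>N x U \<mu>. x \<in> B N \<longrightarrow> invertible_mat (gram vs N x) \<longrightarrow> spectral_decomp N (gram vs N x) U \<mu> \<longrightarrow>
         real N powr (1/2 + 2*\<delta>) * (frob_norm (Mm_sqrt lam (mN Cu Cd N) N U \<mu>))^2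
         = trace_term lam (mN Cu Cd N) N \<mu> / real N powr (1/2 - 2*\<delta>))
   \<and> (\<forall>\<epsilon>>0. \<exists>N0. \<forall>N\<ge>N0. \<forall>x U \<mu>. x \<in> B N \<longrightarrow> invertible_mat (gram vs N x) \<longrightarrow>
         spectral_decomp N (gram vs N x) U \<mu> \<longrightarrow>
         \<bar>real N powr (1/2 + 2*\<delta>) * (frob_norm (Mm_sqrt lam (mN Cu Cd N) N U \<mu>))^2\<bar> < \<epsilon>
       \<and> \<bar>(frob_norm (Mm lam (mN Cu Cd N) N U \<mu>))^2\<bar> < \<epsilon>
       \<and> \<bar>spec_norm (Mm lam (mN Cu Cd N) N U \<mu>)\<bar> < \<epsilon>)"
proof -
  have Cd: "Cd > 0" using C by simp
  have Cu: "Cu > 0" using C by simp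
  define a where "a = Cd / (2*Cd+1)"
  define b where "b = 2 * ((1/4) * (Cu + Cd + 1/2) / (Cd + 1)) - Cu / (2*Cd+1)"
  define c where "c = exp Cu / (lam^2 * (1 - exp (- Cu)))"
  have a0: "a > 0" unfolding a_def using Cd by simp
  have a_lt: "a < 1/2" unfolding a_def using Cd by (simp add: divide_less_eq)
  have b_lt: "b < 1/2"
  proof -
    have "2 * ((1/4) * (Cu + Cd + 1/2) / (Cd + 1)) - 1/2 = (Cu - 1/2) / (2*Cd+2)"
      using Cd by (simp add: field_simps)
    also have "\<dots> < Cu / (2*Cd+2)" using Cd by (simp add: divide_strict_right_mono)
    also have "\<dots> \<le> Cu / (2*Cd+1)" using Cd Cu by (simp add: frac_le)
    finally have "2 * ((1/4) * (Cu + Cd + 1/2) / (Cd + 1)) - 1/2 < Cu / (2*Cd+1)" .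
    then show ?thesis unfolding b_def by linarith
  qed
  have c0: "c \<ge> 0" unfolding c_def using Cu by simp
  define q where "q = max a b"
  define \<delta> where "\<delta> = (1/2 - q) / 4"
  define e where "e = 1/2 - 2*\<delta>"
  have q_lt: "q < 1/2" unfolding q_def using a_lt b_lt by simp
  have \<delta>0: "\<delta> > 0" unfolding \<delta>_def using q_lt by simp
  have qa: "a \<le> q" "b \<le> q" unfolding q_def by auto
  have ee: "e = 1/4 + q/2" unfolding e_def \<delta>_def by (simp add: field_simps)
  have ae: "a < e" and be: "b < e" and e1: "e \<le> 1"
    unfolding ee using qa q_lt by linarith+
  define \<rho> where "\<rho> = (e - a) / 2"
  have \<rho>0: "\<rho> > 0" unfolding \<rho>_def using ae by simp
  have ex1: "a - e + \<rho> < 0" unfolding \<rho>_def using ae by (simp add: field_simps)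
  have ex2: "b - e < 0" using be by simp
  define f where "f N = (1/\<rho>) * real N powr (a - e + \<rho>) + c * real N powr (b - e)" for N :: nat
  have flim: "f \<longlonglongrightarrow> 0"
  proof -
    have l1: "(\<lambda>N::nat. real N powr (a - e + \<rho>)) \<longlonglongrightarrow> 0"
      by (rule tendsto_neg_powr[OF ex1 filterlim_real_sequentially])
    have l2: "(\<lambda>N::nat. real N powr (b - e)) \<longlonglongrightarrow> 0"
      by (rule tendsto_neg_powr[OF ex2 filterlim_real_sequentially])
    have "(\<lambda>N. (1/\<rho>) * real N powr (a - e + \<rho>) + c * real N powr (b - e)) \<longlonglongrightarrow> (1/\<rho>) * 0 + c * 0"
      by (intro tendsto_intros l1 l2)
    then show ?thesis unfolding f_def by simp
  qed
  have ident: "real N powr (1/2 + 2*\<delta>) * (T / real N) = T / real N powr (1/2 - 2*\<delta>)" for T :: real and N :: nat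
  proof (cases "N = 0")
    case True then show ?thesis by simp
  next
    case False
    have "real N powr (1/2 + 2*\<delta>) * real N powr (1/2 - 2*\<delta>) = real N powr ((1/2 + 2*\<delta>) + (1/2 - 2*\<delta>))"
      by (simp only: powr_add)
    also have "\<dots> = real N" using False by simp
    finally have h: "real N powr (1/2 + 2*\<delta>) * real N powr (1/2 - 2*\<delta>) = real N" .
    have p: "real N powr (1/2 - 2*\<delta>) > 0" using False by simp
    show ?thesis using h p False by (simp add: field_simps)
  qed
  show ?thesis
  proof (intro exI[of _ \<delta>] conjI allI impI)
    show "\<delta> > 0" by (rule \<delta>0)
  next
    fix N x U \<mu>
    assume xB: "x \<in> B N" and inv: "invertible_mat (gram vs N x)" and sd: "spectral_decomp N (gram vs N x) U \<mu>"
    show "real N powr (1/2 + 2*\<delta>) * (frob_norm (Mm_sqrt lam (mN Cu Cd N) N U \<mu>))^2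
         = trace_term lam (mN Cu Cd N) N \<mu> / real N powr (1/2 - 2*\<delta>)"
      unfolding key_facts(4)[OF vs inv sd] by (rule ident)
  next
    fix \<epsilon> :: real assume \<epsilon>: "\<epsilon> > 0"
    have "eventually (\<lambda>N. f N < min \<epsilon> 1) sequentially"
      using order_tendstoD(2)[OF flim, of "min \<epsilon> 1"] \<epsilon> by simp
    then obtain N0 where N0: "\<And>N. N \<ge> N0 \<Longrightarrow> f N < min \<epsilon> 1"
      unfolding eventually_sequentially by blast
    define N1 where "N1 = nat \<lceil>exp (2*Cd+1)\<rceil>"
    show "\<exists>N0. \<forall>N\<ge>N0. \<forall>x U \<mu>. x \<in> B N \<longrightarrow> invertible_mat (gram vs N x) \<longrightarrow>
         spectral_decomp N (gram vs N x) U \<mu> \<longrightarrow>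
         \<bar>real N powr (1/2 + 2*\<delta>) * (frob_norm (Mm_sqrt lam (mN Cu Cd N) N U \<mu>))^2\<bar> < \<epsilon>
       \<and> \<bar>(frob_norm (Mm lam (mN Cu Cd N) N U \<mu>))^2\<bar> < \<epsilon>
       \<and> \<bar>spec_norm (Mm lam (mN Cu Cd N) N U \<mu>)\<bar> < \<epsilon>"
    proof (intro exI[of _ "max N0 N1"] allI impI)
      fix N x U \<mu>
      assume NN: "max N0 N1 \<le> N" and xB: "x \<in> B N" and inv: "invertible_mat (gram vs N x)"
        and sd: "spectral_decomp N (gram vs N x) U \<mu>"
      define m where "m = mN Cu Cd N"
      define T where "T = trace_term lam m N \<mu>"
      have fN: "f N < min \<epsilon> 1" using N0 NN by simp
      have NE: "real N \<ge> exp (2*Cd+1)"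
      proof -
        have "exp (2*Cd+1) \<le> real N1" unfolding N1_def by (rule real_nat_ceiling_ge)
        also have "\<dots> \<le> real N" using NN by simp
        finally show ?thesis .
      qed
      have Npos: "real N > 0" using NE by (smt (verit) exp_gt_zero)
      have N1': "real N \<ge> 1"
      proof -
        have "1 \<le> exp (2*Cd+1)" using Cd by simp
        then show ?thesis using NE by linarith
      qed
      have lnN: "ln (real N) \<ge> 2*Cd+1"
        using NE Npos by (metis exp_gt_zero ln_exp ln_le_cancel_iff)
      have K1: "1 \<le> K0 Cd N"
      proof -
        have "ln (real N) / (2*Cd+1) \<ge> 1" using lnN Cd by simp
        then have "\<lfloor>ln (real N) / (2*Cd+1)\<rfloor> \<ge> 1" by linarith
        then show ?thesis unfolding K0_def by linarith
      qed
      have posk: "\<And>k. k < N \<Longrightarrow> \<mu> (Suc k) > 0" using key_facts(1)[OF vs inv sd] .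
      have pos: "\<mu> k > 0" if "1 \<le> k" "k \<le> N" for k
        using posk[of "k - 1"] that by simp
      have mono: "\<And>k l. 1 \<le> k \<Longrightarrow> k \<le> l \<Longrightarrow> l \<le> N \<Longrightarrow> \<mu> l \<le> \<mu> k"
        using sd unfolding spectral_decomp_def by blast
      have BE: "(\<Sum>k=K0 Cd N..N. \<mu> k) \<le> (\<Sum>k=K0 Cd N..N. exp (- Cu * real k))"
        "\<mu> (K0 Cd N) \<ge> exp (- Cd * real (K0 Cd N))"
        using Beig[OF xB K1 sd] by auto
      have Tb: "T \<le> ln (real N) * real N powr a + c * real N powr b"
        using trace_bound[OF lam Cd Cu K1 pos mono BE] key_facts(2)[OF vs inv sd, of lam m]
        unfolding T_def m_def a_def b_def c_def by simp
      have T0: "0 \<le> T" unfolding T_def by (rule key_facts(3)[OF vs inv sd])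
      have eeq: "1/2 - 2*\<delta> = e" unfolding e_def ..
      have Q1: "real N powr (1/2 + 2*\<delta>) * (frob_norm (Mm_sqrt lam m N U \<mu>))^2 = T / real N powr e"
        unfolding key_facts(4)[OF vs inv sd] T_def ident eeq ..
      have lnb: "ln (real N) \<le> real N powr \<rho> / \<rho>" using ln_powr_bound[OF N1' \<rho>0] .
      have Tf: "T / real N powr e \<le> f N"
      proof -
        have pe: "real N powr e > 0" using Npos by simp
        have "T / real N powr e \<le> (ln (real N) * real N powr a + c * real N powr b) / real N powr e"
          using Tb pe by (simp add: divide_right_mono)
        also have "\<dots> = ln (real N) * real N powr (a - e) + c * real N powr (b - e)"
          by (simp add: powr_diff add_divide_distrib)
        also have "\<dots> \<le> real N powr \<rho> / \<rho> * real N powr (a - e) + c * real N powr (b - e)"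
          using lnb by (intro add_right_mono mult_right_mono) auto
        also have "real N powr \<rho> / \<rho> * real N powr (a - e) = (1/\<rho>) * real N powr (a - e + \<rho>)"
          by (simp add: powr_add)
        finally show ?thesis unfolding f_def by simp
      qed
      have TN: "T / real N \<le> T / real N powr e"
      proof -
        have "real N powr e \<le> real N powr 1" using N1' e1 by (intro powr_mono) auto
        then have "real N powr e \<le> real N" using Npos by simp
        moreover have "real N powr e > 0" using Npos by simp
        ultimately show ?thesis using T0 by (intro divide_left_mono) auto
      qed
      have TN0: "0 \<le> T / real N" using T0 Npos by simp
      have TN1: "T / real N < min \<epsilon> 1" using TN Tf fN by simp
      have Q1b: "\<bar>real N powr (1/2 + 2*\<delta>) * (frob_norm (Mm_sqrt lam m N U \<mu>))^2\<bar> < \<epsilon>"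
        unfolding Q1 using Tf fN T0 by simp
      have F2: "(frob_norm (Mm lam m N U \<mu>))^2 \<le> (T / real N)^2"
        unfolding T_def by (rule key_facts(5)[OF vs inv sd])
      have "(T / real N)^2 \<le> T / real N" unfolding power2_eq_square using TN0 TN1 by (intro mult_left_le) auto
      hence Q2b: "\<bar>(frob_norm (Mm lam m N U \<mu>))^2\<bar> < \<epsilon>" using F2 TN1 by simp
      have Fle: "frob_norm (Mm lam m N U \<mu>) \<le> T / real N"
        using F2 TN0 by (rule power2_le_imp_le)
      have SP: "0 \<le> spec_norm (Mm lam m N U \<mu>) \<and> spec_norm (Mm lam m N U \<mu>) \<le> frob_norm (Mm lam m N U \<mu>)"
        using key_facts(6)[OF vs inv sd] Npos by simp
      have Q3b: "\<bar>spec_norm (Mm lam m N U \<mu>)\<bar> < \<epsilon>" using SP Fle TN1 by simp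
      show "\<bar>real N powr (1/2 + 2*\<delta>) * (frob_norm (Mm_sqrt lam (mN Cu Cd N) N U \<mu>))^2\<bar> < \<epsilon>
       \<and> \<bar>(frob_norm (Mm lam (mN Cu Cd N) N U \<mu>))^2\<bar> < \<epsilon>
       \<and> \<bar>spec_norm (Mm lam (mN Cu Cd N) N U \<mu>)\<bar> < \<epsilon>"
        using Q1b Q2b Q3b unfolding m_def by simp
    qed
  qed
qed

end
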